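(* The 240 minimal vectors of the $E_8$ lattice can be partitioned into 15 coordinate frames. Consequently $E_8$ is the intersection of 15 pairwise congruent lattices in $\mathbb{R}^8$, each similar to $\mathbb{Z}^8$. *)

theory Defs
  imports "HOL-Analysis.Analysis"
begin

definition E8 :: "(real^8) set" where
  "E8 = {x. ((\<forall>i. x$i \<in> \<int>) \<or> (\<forall>i. x$i - 1/2 \<in> \<int>)) \<and> (\<Sum>i\<in>UNIV. x$i) / 2 \<in> \<int>}"

definition E8_min :: "(real^8) set" where
  "E8_min = {x \<in> E8. x \<noteq> 0 \<and> (\<forall>y\<in>E8. y \<noteq> 0 \<longrightarrow> norm x \<le> norm y)}"

definition coordinate_frame :: "(real^8) set \<Rightarrow> bool" where
  "coordinate_frame F \<longleftrightarrow> (\<exists>b :: 8 \<Rightarrow> real^8.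
     (\<forall>i. b i \<noteq> 0) \<and> (\<forall>i j. i \<noteq> j \<longrightarrow> b i \<bullet> b j = 0) \<and>
     (\<forall>i j. norm (b i) = norm (b j)) \<and> F = range b \<union> uminus ` range b)"

definition Z8 :: "(real^8) set" where
  "Z8 = {x. \<forall>i. x$i \<in> \<int>}"

definition similar_to_Z8 :: "(real^8) set \<Rightarrow> bool" where
  "similar_to_Z8 L \<longleftrightarrow> (\<exists>c f. c > 0 \<and> orthogonal_transformation f \<and>
     L = (\<lambda>x. c *\<^sub>R f x) ` Z8)"

definition congruent_lattices :: "(real^8) set \<Rightarrow> (real^8) set \<Rightarrow> bool" where
  "congruent_lattices L M \<longleftrightarrow> (\<exists>f. orthogonal_transformation f \<and> M = f ` L)"

end

theory Submission
  imports Defs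
begin

lemma ortho_lattice:
  fixes b :: "8 \<Rightarrow> real^8"
  assumes ob: "\<And>i j. b i \<bullet> b j = (if i = j then 2 else 0)"
  defines "f \<equiv> (\<lambda>x::real^8. \<Sum>i\<in>UNIV. (x$i / sqrt 2) *\<^sub>R b i)"
  shows "orthogonal_transformation f"
    and "{x. \<forall>i. x \<bullet> b i \<in> \<int>} = (\<lambda>x. (1 / sqrt 2) *\<^sub>R f x) ` Z8"
proof -
  have lin: "linear f"
  proof (rule linearI)
    fix x y :: "real^8"
    show "f (x + y) = f x + f y"
      unfolding f_def by (simp add: add_divide_distrib scaleR_add_left sum.distrib)
  next
    fix c :: real and x :: "real^8"
    show "f (c *\<^sub>R x) = c *\<^sub>R f x"
      unfolding f_def by (simp add: scaleR_sum_right)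
  qed
  have fb: "f x \<bullet> b k = sqrt 2 * x$k" for x k
  proof -
    have "f x \<bullet> b k = (\<Sum>i\<in>UNIV. (x$i / sqrt 2) * (b i \<bullet> b k))"
      unfolding f_def by (simp add: inner_sum_left)
    also have "\<dots> = (\<Sum>i\<in>UNIV. if i = k then (x$i / sqrt 2) * 2 else 0)"
      by (rule sum.cong) (auto simp: ob)
    also have "\<dots> = x$k / sqrt 2 * 2" by simp
    also have "\<dots> = sqrt 2 * x$k"
      by (metis (no_types, lifting) divide_divide_eq_right mult.commute nonzero_mult_div_cancel_left real_div_sqrt times_divide_eq_left zero_le_numeral zero_neq_numeral)
    finally show ?thesis .
  qed
  have ff: "f x \<bullet> f y = x \<bullet> y" for x y
  proof -
    have "f x \<bullet> f y = (\<Sum>i\<in>UNIV. (y$i / sqrt 2) * (f x \<bullet> b i))"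
    proof -
      have fy: "f y = (\<Sum>i\<in>UNIV. (y$i / sqrt 2) *\<^sub>R b i)" by (simp add: f_def)
      show ?thesis by (simp add: fy inner_sum_right)
    qed
    also have "\<dots> = (\<Sum>i\<in>UNIV. x$i * y$i)"
      by (rule sum.cong) (auto simp: fb)
    also have "\<dots> = x \<bullet> y" by (simp add: inner_vec_def)
    finally show ?thesis .
  qed
  show ot: "orthogonal_transformation f"
    unfolding orthogonal_transformation_def using lin ff by auto
  show "{x. \<forall>i. x \<bullet> b i \<in> \<int>} = (\<lambda>x. (1 / sqrt 2) *\<^sub>R f x) ` Z8"
  proof (intro equalityI subsetI)
    fix x assume "x \<in> {x. \<forall>i. x \<bullet> b i \<in> \<int>}"
    then have xi: "\<And>i. x \<bullet> b i \<in> \<int>" by auto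
    obtain y where y: "f y = sqrt 2 *\<^sub>R x"
      using orthogonal_transformation_surj[OF ot] by (metis surjD)
    have "y$i = x \<bullet> b i" for i
    proof -
      have "sqrt 2 * y$i = sqrt 2 * (x \<bullet> b i)"
        using fb[of y i] y by simp
      then show ?thesis by simp
    qed
    then have "y \<in> Z8" using xi by (simp add: Z8_def)
    moreover have "x = (1 / sqrt 2) *\<^sub>R f y" using y by simp
    ultimately show "x \<in> (\<lambda>x. (1 / sqrt 2) *\<^sub>R f x) ` Z8" by blast
  next
    fix x assume "x \<in> (\<lambda>x. (1 / sqrt 2) *\<^sub>R f x) ` Z8"
    then obtain y where y: "y \<in> Z8" "x = (1 / sqrt 2) *\<^sub>R f y" by auto
    have "x \<bullet> b i = y $ i" for i
      using y(2) fb[of y i] by simp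
    then show "x \<in> {x. \<forall>i. x \<bullet> b i \<in> \<int>}" using y(1) by (simp add: Z8_def)
  qed
qed


lemma congr_scaled:
  assumes "orthogonal_transformation f1" "orthogonal_transformation f2"
  shows "congruent_lattices ((\<lambda>x. c *\<^sub>R f1 x) ` Z8) ((\<lambda>x. c *\<^sub>R f2 x) ` Z8)"
proof -
  let ?g = "f2 \<circ> inv f1"
  have og: "orthogonal_transformation ?g"
    by (intro orthogonal_transformation_compose assms orthogonal_transformation_inv)
  have "?g (c *\<^sub>R f1 z) = c *\<^sub>R f2 z" for z
  proof -
    have "?g (c *\<^sub>R f1 z) = c *\<^sub>R ?g (f1 z)" by (rule orthogonal_transformation_scaleR[OF og])
    also have "inv f1 (f1 z) = z" using orthogonal_transformation_inj[OF assms(1)] by (simp add: inv_f_f)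
    then have "?g (f1 z) = f2 z" by simp
    finally show ?thesis by simp
  qed
  then have "(\<lambda>x. c *\<^sub>R f2 x) ` Z8 = ?g ` ((\<lambda>x. c *\<^sub>R f1 x) ` Z8)"
    by (simp add: image_image)
  then show ?thesis unfolding congruent_lattices_def using og by blast
qed


lemma int_floor: "r \<in> \<int> \<Longrightarrow> of_int \<lfloor>r\<rfloor> = r"
  by (metis Ints_cases floor_of_int)

lemma E8_rep:
  assumes "x \<in> E8"
  shows "\<exists>a p. p \<in> {0,1::real} \<and> (\<forall>i. x$i = of_int (a i) + p/2) \<and> (\<Sum>i\<in>UNIV. x$i)/2 \<in> \<int>"
proof -
  from assms have s: "(\<Sum>i\<in>UNIV. x$i)/2 \<in> \<int>" and c: "(\<forall>i. x$i \<in> \<int>) \<or> (\<forall>i. x$i - 1/2 \<in> \<int>)"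
    unfolding E8_def by blast+
  from c show ?thesis
  proof
    assume h: "\<forall>i. x$i \<in> \<int>"
    have e: "\<forall>i. x$i = of_int (\<lfloor>x$i\<rfloor>) + 0/2"
    proof
      fix i show "x$i = of_int (\<lfloor>x$i\<rfloor>) + 0/2" using int_floor[of "x$i"] h by simp
    qed
    show ?thesis
      by (rule exI[of _ "\<lambda>i. \<lfloor>x$i\<rfloor>"], rule exI[of _ 0]) (use e s in simp)
  next
    assume h: "\<forall>i. x$i - 1/2 \<in> \<int>"
    have e: "\<forall>i. x$i = of_int (\<lfloor>x$i - 1/2\<rfloor>) + 1/2"
    proof
      fix i show "x$i = of_int (\<lfloor>x$i - 1/2\<rfloor>) + 1/2" using int_floor[of "x$i - 1/2"] h by simp
    qed
    show ?thesis
      by (rule exI[of _ "\<lambda>i. \<lfloor>x$i - 1/2\<rfloor>"], rule exI[of _ 1]) (use e s in simp)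
  qed
qed

lemma E8_integral:
  assumes "x \<in> E8" "y \<in> E8"
  shows "x \<bullet> y \<in> \<int>"
proof -
  obtain a p where p: "p \<in> {0,1::real}" and a: "\<And>i. x$i = of_int (a i) + p/2" and sx: "(\<Sum>i\<in>UNIV. x$i)/2 \<in> \<int>"
    using E8_rep[OF assms(1)] by blast
  obtain b q where q: "q \<in> {0,1::real}" and b: "\<And>i. y$i = of_int (b i) + q/2" and sy: "(\<Sum>i\<in>UNIV. y$i)/2 \<in> \<int>"
    using E8_rep[OF assms(2)] by blast
  have sxa: "(\<Sum>i\<in>UNIV. x$i) = (\<Sum>i\<in>UNIV. of_int (a i)) + 4 * p"
    by (simp add: a sum.distrib)
  have sya: "(\<Sum>i\<in>UNIV. y$i) = (\<Sum>i\<in>UNIV. of_int (b i)) + 4 * q"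
    by (simp add: b sum.distrib)
  have A: "(\<Sum>i\<in>UNIV. of_int (a i)) / 2 \<in> (\<int>::real set)"
  proof -
    have "(\<Sum>i\<in>UNIV. of_int (a i)) / 2 = (\<Sum>i\<in>UNIV. x$i)/2 - 2 * p" (is "_ = ?r") by (simp add: sxa add_divide_distrib)
    moreover have "?r \<in> \<int>" using p by (intro Ints_diff sx) auto
    ultimately show ?thesis by (simp only:)
  qed
  have B: "(\<Sum>i\<in>UNIV. of_int (b i)) / 2 \<in> (\<int>::real set)"
  proof -
    have "(\<Sum>i\<in>UNIV. of_int (b i)) / 2 = (\<Sum>i\<in>UNIV. y$i)/2 - 2 * q" (is "_ = ?r") by (simp add: sya add_divide_distrib)
    moreover have "?r \<in> \<int>" using q by (intro Ints_diff sy) auto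
    ultimately show ?thesis by (simp only:)
  qed
  have e: "\<And>i. (of_int (a i) + p/2) * (of_int (b i) + q/2) = of_int (a i * b i) + q * (of_int (a i) / 2) + p * (of_int (b i)/2) + p*q/4"
    by (simp add: algebra_simps)
  have "x \<bullet> y = (\<Sum>i\<in>UNIV. (of_int (a i) + p/2) * (of_int (b i) + q/2))"
    by (simp add: inner_vec_def a b)
  also have "\<dots> = (\<Sum>i\<in>UNIV. of_int (a i * b i) + q * (of_int (a i) / 2) + p * (of_int (b i)/2) + p*q/4)"
    by (simp only: e)
  also have "\<dots> = (\<Sum>i\<in>UNIV. of_int (a i * b i)) + q * ((\<Sum>i\<in>UNIV. of_int (a i)) / 2)
      + p * ((\<Sum>i\<in>UNIV. of_int (b i)) / 2) + 2 * (p * q)"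
    by (simp only: sum.distrib sum_distrib_left[symmetric] sum_divide_distrib[symmetric]) simp
  also have "\<dots> \<in> \<int>"
  proof -
    have qI: "q \<in> \<int>" using q by auto
    have pI: "p \<in> \<int>" using p by auto
    show ?thesis by (intro Ints_add Ints_mult Ints_sum qI pI A B Ints_of_int Ints_numeral)
  qed
  finally show ?thesis .
qed


definition FB :: "int list list list" where "FB = [[[2, 2, 0, 0, 0, 0, 0, 0], [2, -2, 0, 0, 0, 0, 0, 0], [0, 0, 2, 2, 0, 0, 0, 0], [0, 0, 2, -2, 0, 0, 0, 0], [0, 0, 0, 0, 2, 2, 0, 0], [0, 0, 0, 0, 2, -2, 0, 0], [0, 0, 0, 0, 0, 0, 2, 2], [0, 0, 0, 0, 0, 0, 2, -2]],
 [[2, 0, 2, 0, 0, 0, 0, 0], [2, 0, -2, 0, 0, 0, 0, 0], [0, 2, 0, 2, 0, 0, 0, 0], [0, 2, 0, -2, 0, 0, 0, 0], [0, 0, 0, 0, 2, 0, 2, 0], [0, 0, 0, 0, 2, 0, -2, 0], [0, 0, 0, 0, 0, 2, 0, 2], [0, 0, 0, 0, 0, 2, 0, -2]],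
 [[2, 0, 0, 2, 0, 0, 0, 0], [2, 0, 0, -2, 0, 0, 0, 0], [0, 2, 2, 0, 0, 0, 0, 0], [0, 2, -2, 0, 0, 0, 0, 0], [0, 0, 0, 0, 2, 0, 0, 2], [0, 0, 0, 0, 2, 0, 0, -2], [0, 0, 0, 0, 0, 2, 2, 0], [0, 0, 0, 0, 0, 2, -2, 0]],
 [[2, 0, 0, 0, 2, 0, 0, 0], [2, 0, 0, 0, -2, 0, 0, 0], [0, 2, 0, 0, 0, 2, 0, 0], [0, 2, 0, 0, 0, -2, 0, 0], [0, 0, 2, 0, 0, 0, 2, 0], [0, 0, 2, 0, 0, 0, -2, 0], [0, 0, 0, 2, 0, 0, 0, 2], [0, 0, 0, 2, 0, 0, 0, -2]],
 [[2, 0, 0, 0, 0, 2, 0, 0], [2, 0, 0, 0, 0, -2, 0, 0], [0, 2, 0, 0, 2, 0, 0, 0], [0, 2, 0, 0, -2, 0, 0, 0], [0, 0, 2, 0, 0, 0, 0, 2], [0, 0, 2, 0, 0, 0, 0, -2], [0, 0, 0, 2, 0, 0, 2, 0], [0, 0, 0, 2, 0, 0, -2, 0]],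
 [[2, 0, 0, 0, 0, 0, 2, 0], [2, 0, 0, 0, 0, 0, -2, 0], [0, 2, 0, 0, 0, 0, 0, 2], [0, 2, 0, 0, 0, 0, 0, -2], [0, 0, 2, 0, 2, 0, 0, 0], [0, 0, 2, 0, -2, 0, 0, 0], [0, 0, 0, 2, 0, 2, 0, 0], [0, 0, 0, 2, 0, -2, 0, 0]],
 [[2, 0, 0, 0, 0, 0, 0, 2], [2, 0, 0, 0, 0, 0, 0, -2], [0, 2, 0, 0, 0, 0, 2, 0], [0, 2, 0, 0, 0, 0, -2, 0], [0, 0, 2, 0, 0, 2, 0, 0], [0, 0, 2, 0, 0, -2, 0, 0], [0, 0, 0, 2, 2, 0, 0, 0], [0, 0, 0, 2, -2, 0, 0, 0]],
 [[1, 1, 1, 1, 1, 1, 1, 1], [1, -1, 1, -1, 1, -1, 1, -1], [1, 1, -1, -1, 1, 1, -1, -1], [1, -1, -1, 1, 1, -1, -1, 1], [1, 1, 1, 1, -1, -1, -1, -1], [1, -1, 1, -1, -1, 1, -1, 1], [1, 1, -1, -1, -1, -1, 1, 1], [1, -1, -1, 1, -1, 1, 1, -1]],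
 [[1, 1, 1, -1, 1, 1, 1, -1], [1, -1, 1, 1, 1, -1, 1, 1], [1, 1, -1, 1, 1, 1, -1, 1], [1, -1, -1, -1, 1, -1, -1, -1], [1, 1, 1, -1, -1, -1, -1, 1], [1, -1, 1, 1, -1, 1, -1, -1], [1, 1, -1, 1, -1, -1, 1, -1], [1, -1, -1, -1, -1, 1, 1, 1]],
 [[1, 1, 1, 1, 1, -1, 1, -1], [1, -1, 1, -1, 1, 1, 1, 1], [1, 1, -1, -1, 1, -1, -1, 1], [1, -1, -1, 1, 1, 1, -1, -1], [1, 1, 1, 1, -1, 1, -1, 1], [1, -1, 1, -1, -1, -1, -1, -1], [1, 1, -1, -1, -1, 1, 1, -1], [1, -1, -1, 1, -1, -1, 1, 1]],
 [[1, 1, 1, -1, 1, -1, 1, 1], [1, -1, 1, 1, 1, 1, 1, -1], [1, 1, -1, 1, 1, -1, -1, -1], [1, -1, -1, -1, 1, 1, -1, 1], [1, 1, 1, -1, -1, 1, -1, -1], [1, -1, 1, 1, -1, -1, -1, 1], [1, 1, -1, 1, -1, 1, 1, 1], [1, -1, -1, -1, -1, -1, 1, -1]],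
 [[1, 1, 1, 1, 1, 1, -1, -1], [1, -1, 1, -1, 1, -1, -1, 1], [1, 1, -1, -1, 1, 1, 1, 1], [1, -1, -1, 1, 1, -1, 1, -1], [1, 1, 1, 1, -1, -1, 1, 1], [1, -1, 1, -1, -1, 1, 1, -1], [1, 1, -1, -1, -1, -1, -1, -1], [1, -1, -1, 1, -1, 1, -1, 1]],
 [[1, 1, 1, -1, 1, 1, -1, 1], [1, -1, 1, 1, 1, -1, -1, -1], [1, 1, -1, 1, 1, 1, 1, -1], [1, -1, -1, -1, 1, -1, 1, 1], [1, 1, 1, -1, -1, -1, 1, -1], [1, -1, 1, 1, -1, 1, 1, 1], [1, 1, -1, 1, -1, -1, -1, 1], [1, -1, -1, -1, -1, 1, -1, -1]],
 [[1, 1, 1, 1, 1, -1, -1, 1], [1, -1, 1, -1, 1, 1, -1, -1], [1, 1, -1, -1, 1, -1, 1, -1], [1, -1, -1, 1, 1, 1, 1, 1], [1, 1, 1, 1, -1, 1, 1, -1], [1, -1, 1, -1, -1, -1, 1, 1], [1, 1, -1, -1, -1, 1, -1, 1], [1, -1, -1, 1, -1, -1, -1, -1]],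
 [[1, 1, 1, -1, 1, -1, -1, -1], [1, -1, 1, 1, 1, 1, -1, 1], [1, 1, -1, 1, 1, -1, 1, 1], [1, -1, -1, -1, 1, 1, 1, -1], [1, 1, 1, -1, -1, 1, 1, 1], [1, -1, 1, 1, -1, -1, 1, -1], [1, 1, -1, 1, -1, 1, -1, -1], [1, -1, -1, -1, -1, -1, -1, 1]]]
"

definition frameRoots :: "nat \<Rightarrow> int list list" where
  "frameRoots j = FB ! j @ map (map uminus) (FB ! j)"

definition cls :: "int list \<Rightarrow> nat" where
  "cls u = nat (if even (u!0) then
     (let z = (\<lambda>k. (u!k)^2 div 4) in (z 1 + z 3 + z 5 + z 7) mod 2 + 2*((z 2 + z 3 + z 6 + z 7) mod 2) + 4*((z 4 + z 5 + z 6 + z 7) mod 2) - 1)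
   else (let s = (\<lambda>k. (1 - u!k) div 2) in 7 + (s 0 + s 1 + s 2 + s 3) mod 2 + 2*((s 0 + s 1 + s 4 + s 5) mod 2) + 4*((s 0 + s 2 + s 4 + s 6) mod 2)))"

fun gen :: "nat \<Rightarrow> int \<Rightarrow> int list \<Rightarrow> int list list" where
  "gen 0 s A = (if s = 0 then [[]] else [])"
| "gen (Suc n) s A = (if s < 0 then [] else concat (map (\<lambda>a. map (Cons a) (gen n (s - a*a) A)) A))"

definition sumsq :: "int list \<Rightarrow> int" where "sumsq u = sum_list (map (\<lambda>a. a*a) u)"
definition dotL :: "int list \<Rightarrow> int list \<Rightarrow> int" where "dotL u v = sum_list (map2 (*) u v)"

lemma K1: "\<forall>s\<in>set [0..8]. \<forall>u\<in>set (gen 8 s [-2,0,2]). 4 dvd sum_list u \<longrightarrow>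
   (u = replicate 8 0 \<or> (s = 8 \<and> cls u < 15 \<and> u \<in> set (frameRoots (cls u))))"
  by code_simp
lemma K2: "\<forall>s\<in>set [0..8]. \<forall>u\<in>set (gen 8 s [-1,1]). 4 dvd sum_list u \<longrightarrow>
   (s = 8 \<and> cls u < 15 \<and> u \<in> set (frameRoots (cls u)))"
  by code_simp
lemma K3: "\<forall>j\<in>set [0..<15]. \<forall>u\<in>set (frameRoots j). cls u = j \<and> length u = 8 \<and>
   (list_all even u \<or> list_all odd u) \<and> 4 dvd sum_list u \<and> sumsq u = 8"
  by code_simp
lemma K4: "\<forall>j\<in>set [0..<15]. length (FB!j) = 8 \<and> (\<forall>i\<in>set [0..<8]. \<forall>i'\<in>set [0..<8]. dotL (FB!j!i) (FB!j!i') = (if i=i' then 8 else 0))"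
  by code_simp

lemma K3': "j < 15 \<Longrightarrow> u \<in> set (frameRoots j) \<Longrightarrow> cls u = j \<and> length u = 8 \<and>
   (list_all even u \<or> list_all odd u) \<and> 4 dvd sum_list u \<and> sumsq u = 8"
  using K3 by auto

lemma K4': "j < 15 \<Longrightarrow> length (FB!j) = 8"
  using K4 by auto

lemma K4'': "j < 15 \<Longrightarrow> i < 8 \<Longrightarrow> i' < 8 \<Longrightarrow> dotL (FB!j!i) (FB!j!i') = (if i=i' then 8 else 0)"
  using K4 by auto

lemma FB_len: "j < 15 \<Longrightarrow> i < 8 \<Longrightarrow> length (FB!j!i) = 8"
  using K3'[of j "FB!j!i"] K4'[of j] by (auto simp: frameRoots_def)

definition idx :: "nat \<Rightarrow> 8" where "idx k = of_nat k"

lemma idx_inj: "inj_on idx {..<8}"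
proof (rule inj_onI)
  fix a b assume "a \<in> {..<8::nat}" "b \<in> {..<8::nat}" "idx a = idx b"
  then show "a = b"
    unfolding idx_def
    by (auto simp: lessThan_nat_numeral less_Suc_eq numeral_eq_Suc)
qed

lemma idx_surj: "idx ` {..<8} = UNIV"
proof -
  have "card (idx ` {..<8}) = 8" using idx_inj by (simp add: card_image)
  then show ?thesis by (simp add: card_subset_eq)
qed

definition nat_of :: "8 \<Rightarrow> nat" where "nat_of i = inv_into {..<8} idx i"

lemma idx_nat_of [simp]: "idx (nat_of i) = i"
  unfolding nat_of_def using idx_surj by (metis UNIV_I f_inv_into_f)

lemma nat_of_lt [simp]: "nat_of i < 8"
  unfolding nat_of_def using idx_surj by (metis UNIV_I inv_into_into lessThan_iff)

lemma nat_of_idx [simp]: "k < 8 \<Longrightarrow> nat_of (idx k) = k"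
  unfolding nat_of_def using idx_inj by (simp add: inv_into_f_f)

lemma nat_of_inj: "nat_of i = nat_of i' \<Longrightarrow> i = i'"
  by (metis idx_nat_of)

lemma range_nat_of: "range nat_of = {..<8}"
proof
  show "range nat_of \<subseteq> {..<8}" by auto
  show "{..<8} \<subseteq> range nat_of"
  proof
    fix k :: nat assume "k \<in> {..<8}"
    then have "nat_of (idx k) = k" by simp
    then show "k \<in> range nat_of" by (metis rangeI)
  qed
qed

lemma sum8: "(\<Sum>i\<in>UNIV. g i) = (\<Sum>k<8. g (idx k))"
proof -
  have "(\<Sum>i\<in>UNIV. g i) = (\<Sum>i\<in>idx ` {..<8}. g i)" by (simp add: idx_surj)
  also have "\<dots> = (\<Sum>k<8. g (idx k))" using idx_inj by (simp add: sum.reindex)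
  finally show ?thesis .
qed

lemma all8: "(\<forall>i. P i) \<longleftrightarrow> (\<forall>k<8. P (idx k))"
  by (metis idx_nat_of nat_of_lt)

section \<open>Vectors from integer lists (halved)\<close>

definition VL :: "int list \<Rightarrow> real^8" where "VL u = (\<chi> i. of_int (u ! nat_of i) / 2)"

lemma VL_idx: "k < 8 \<Longrightarrow> VL u $ idx k = of_int (u!k) / 2"
  by (simp add: VL_def)

lemma dotL_sum: "length u = n \<Longrightarrow> length v = n \<Longrightarrow> dotL u v = (\<Sum>k<n. u!k * v!k)"
  unfolding dotL_def by (simp add: sum_list_sum_nth atLeast0LessThan)

lemma sumsq_dotL: "sumsq u = dotL u u"
  unfolding sumsq_def dotL_def by (simp add: zip_same_conv_map o_def)

lemma VL_inner: "length u = 8 \<Longrightarrow> length v = 8 \<Longrightarrow> VL u \<bullet> VL v = of_int (dotL u v) / 4"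
proof -
  assume lu: "length u = 8" and lv: "length v = 8"
  have "VL u \<bullet> VL v = (\<Sum>k<8. VL u $ idx k * VL v $ idx k)"
    by (simp add: inner_vec_def sum8)
  also have "\<dots> = (\<Sum>k<8. of_int (u!k * v!k) / 4)"
    by (rule sum.cong) (auto simp: VL_idx)
  also have "\<dots> = of_int (dotL u v) / 4"
    using lu lv by (simp add: dotL_sum sum_divide_distrib)
  finally show ?thesis .
qed

lemma VL_sum: "length u = 8 \<Longrightarrow> (\<Sum>i\<in>UNIV. VL u $ i) = of_int (sum_list u) / 2"
proof -
  assume lu: "length u = 8"
  have "(\<Sum>i\<in>UNIV. VL u $ i) = (\<Sum>k<8. of_int (u!k) / 2)"
    by (simp add: sum8 VL_idx)
  also have "\<dots> = of_int (sum_list u) / 2"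
    using lu by (simp add: sum_list_sum_nth atLeast0LessThan sum_divide_distrib)
  finally show ?thesis .
qed

lemma VL_inj: "length u = 8 \<Longrightarrow> length v = 8 \<Longrightarrow> VL u = VL v \<Longrightarrow> u = v"
proof (rule nth_equalityI)
  assume "length u = 8" "length v = 8" "VL u = VL v"
  then show "length u = length v" by simp
  fix k assume "k < length u"
  then have "k < 8" using \<open>length u = 8\<close> by simp
  have "VL u $ idx k = VL v $ idx k" using \<open>VL u = VL v\<close> by simp
  then show "u ! k = v ! k" using \<open>k < 8\<close> by (simp add: VL_idx)
qed

lemma VL_neg: "length u = 8 \<Longrightarrow> - VL u = VL (map uminus u)"
  by (simp add: vec_eq_iff VL_def)

lemma VL_zero: "VL (replicate 8 0) = 0"
  by (simp add: vec_eq_iff VL_def)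

lemma VL_E8:
  assumes lu: "length u = 8" and par: "list_all even u \<or> list_all odd u" and d4: "4 dvd sum_list u"
  shows "VL u \<in> E8"
proof -
  have c: "(\<forall>i. VL u $ i \<in> \<int>) \<or> (\<forall>i. VL u $ i - 1/2 \<in> \<int>)"
    using par
  proof
    assume "list_all even u"
    then have "\<forall>k<8. even (u!k)" using lu by (simp add: list_all_length)
    then have "\<forall>k<8. VL u $ idx k \<in> \<int>"
      by (auto simp: VL_idx elim!: evenE)
    then show ?thesis using all8[of "\<lambda>i. VL u $ i \<in> \<int>"] by blast
  next
    assume "list_all odd u"
    then have "\<forall>k<8. odd (u!k)" using lu by (simp add: list_all_length)
    then have "\<forall>k<8. VL u $ idx k - 1/2 \<in> \<int>"
    proof (intro allI impI)
      fix k :: nat assume k: "k < 8" and "\<forall>k<8. odd (u!k)"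
      then obtain m where m: "u!k = 2*m+1" by (meson oddE)
      have "VL u $ idx k - 1/2 = of_int m" using k by (simp add: VL_idx m add_divide_distrib)
      then show "VL u $ idx k - 1/2 \<in> \<int>" by simp
    qed
    then show ?thesis using all8[of "\<lambda>i. VL u $ i - 1/2 \<in> \<int>"] by blast
  qed
  obtain m where m: "sum_list u = 4 * m" using d4 by (auto elim!: dvdE)
  have "(\<Sum>i\<in>UNIV. VL u $ i) / 2 = of_int m"
    using lu by (simp add: VL_sum m)
  then have "(\<Sum>i\<in>UNIV. VL u $ i) / 2 \<in> \<int>" by simp
  with c show ?thesis by (simp add: E8_def)
qed

lemma E8_VL:
  assumes "x \<in> E8"
  shows "\<exists>u. length u = 8 \<and> x = VL u \<and> (list_all even u \<or> list_all odd u) \<and> 4 dvd sum_list u"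
proof -
  obtain a p where p: "p \<in> {0,1::real}" and a: "\<And>i. x$i = of_int (a i) + p/2"
     and s: "(\<Sum>i\<in>UNIV. x$i)/2 \<in> \<int>"
    using E8_rep[OF assms] by blast
  define P :: int where "P = (if p = 0 then 0 else 1)"
  have pP: "p = of_int P" using p by (auto simp: P_def)
  define u where "u = map (\<lambda>k. 2 * a (idx k) + P) [0..<8]"
  have lu: "length u = 8" by (simp add: u_def)
  have uk: "k < 8 \<Longrightarrow> u ! k = 2 * a (idx k) + P" for k by (simp add: u_def)
  have xu: "x = VL u"
  proof -
    have "x $ i = VL u $ i" for i
    proof -
      have "VL u $ i = VL u $ idx (nat_of i)" by simp
      also have "\<dots> = of_int (u ! nat_of i) / 2" by (rule VL_idx) simp
      also have "\<dots> = of_int (a i) + p / 2" by (simp add: uk pP add_divide_distrib)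
      finally show ?thesis by (simp add: a)
    qed
    then show ?thesis by (simp add: vec_eq_iff)
  qed
  have par: "list_all even u \<or> list_all odd u"
  proof (cases "P = 0")
    case True
    then show ?thesis by (simp add: list_all_length lu uk)
  next
    case False
    then have "P = 1" by (simp add: P_def split: if_splits)
    then show ?thesis by (simp add: list_all_length lu uk)
  qed
  obtain m where m: "(\<Sum>i\<in>UNIV. x$i)/2 = of_int m" using s by (auto elim: Ints_cases)
  have "of_int (sum_list u) / 2 = (\<Sum>i\<in>UNIV. x$i)" using VL_sum[OF lu] xu by simp
  then have "(of_int (sum_list u) :: real) = of_int (4 * m)" using m by simp
  then have "sum_list u = 4 * m" by (simp only: of_int_eq_iff)
  then have "4 dvd sum_list u" by simp
  with lu xu par show ?thesis by blast
qed

lemma sumsq_nonneg: "0 \<le> sumsq u"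
  unfolding sumsq_def by (induction u) auto

lemma sumsq_Cons: "sumsq (a # u) = a * a + sumsq u"
  by (simp add: sumsq_def)

lemma elem_le_sumsq: "a \<in> set u \<Longrightarrow> a * a \<le> sumsq u"
proof (induction u)
  case Nil then show ?case by simp
next
  case (Cons b u)
  have bb: "0 \<le> b * b" by simp
  show ?case
  proof (cases "a = b")
    case True
    then show ?thesis using sumsq_nonneg[of u] by (simp add: sumsq_Cons)
  next
    case False
    then have "a * a \<le> sumsq u" using Cons by auto
    then show ?thesis unfolding sumsq_Cons using bb by linarith
  qed
qed

lemma gen_complete: "length u = n \<Longrightarrow> set u \<subseteq> set A \<Longrightarrow> sumsq u = s \<Longrightarrow> u \<in> set (gen n s A)"
proof (induction u arbitrary: n s)
  case Nil then show ?case by (simp add: sumsq_def)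
next
  case (Cons a u)
  then obtain n' where n: "n = Suc n'" by (cases n) auto
  have s: "s = a * a + sumsq u" using Cons by (simp add: sumsq_Cons)
  have "0 \<le> a * a" by simp
  then have "\<not> s < 0" using s sumsq_nonneg[of u] by linarith
  moreover have "u \<in> set (gen n' (s - a * a) A)"
    using Cons n s by auto
  ultimately show ?case using n Cons by auto
qed

lemma sq_le8: "(a::int) * a \<le> 8 \<Longrightarrow> -2 \<le> a \<and> a \<le> 2"
proof (rule ccontr)
  assume h: "a * a \<le> 8" "\<not> (-2 \<le> a \<and> a \<le> 2)"
  then have "3 \<le> \<bar>a\<bar>" by auto
  then have "3 * 3 \<le> \<bar>a\<bar> * \<bar>a\<bar>" by (intro mult_mono) auto
  then show False using h(1) by (simp add: abs_mult_self_eq)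
qed

lemma E8_low:
  assumes "x \<in> E8" "x \<noteq> 0" "x \<bullet> x \<le> 2"
  shows "x \<bullet> x = 2 \<and> (\<exists>j<15. x \<in> VL ` set (frameRoots j))"
proof -
  obtain u where lu: "length u = 8" and xu: "x = VL u" and par: "list_all even u \<or> list_all odd u"
    and d4: "4 dvd sum_list u"
    using E8_VL[OF assms(1)] by blast
  define s where "s = sumsq u"
  have xx: "x \<bullet> x = of_int s / 4" using xu lu by (simp add: VL_inner s_def sumsq_dotL)
  have s8: "s \<le> 8" using xx assms(3) by simp
  have s0: "0 \<le> s" using sumsq_nonneg by (simp add: s_def)
  have sset: "s \<in> set [0..8]" using s8 s0 by simp
  have bnd: "a \<in> set u \<Longrightarrow> -2 \<le> a \<and> a \<le> 2" for a
    using elem_le_sumsq[of a u] s8 sq_le8 by (simp add: s_def)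
  have un0: "u \<noteq> replicate 8 0" using assms(2) xu VL_zero by auto
  have res: "s = 8 \<and> cls u < 15 \<and> u \<in> set (frameRoots (cls u))"
    using par
  proof
    assume ev: "list_all even u"
    have "set u \<subseteq> set [-2,0,2]"
    proof
      fix a assume a: "a \<in> set u"
      then have "even a" using ev by (simp add: list_all_iff)
      moreover have "-2 \<le> a \<and> a \<le> 2" using bnd a by blast
      ultimately show "a \<in> set [-2,0,2]" by (auto; presburger)
    qed
    then have "u \<in> set (gen 8 s [-2,0,2])" using gen_complete lu s_def by blast
    then show ?thesis using K1 sset d4 un0 by blast
  next
    assume od: "list_all odd u"
    have "set u \<subseteq> set [-1,1]"
    proof
      fix a assume a: "a \<in> set u"
      then have "odd a" using od by (simp add: list_all_iff)
      moreover have "-2 \<le> a \<and> a \<le> 2" using bnd a by blast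
      ultimately show "a \<in> set [-1,1]" by (auto; presburger)
    qed
    then have "u \<in> set (gen 8 s [-1,1])" using gen_complete lu s_def by blast
    then show ?thesis using K2 sset d4 by blast
  qed
  then show ?thesis using xx xu by auto
qed

lemma root_E8: "j < 15 \<Longrightarrow> u \<in> set (frameRoots j) \<Longrightarrow> VL u \<in> E8 \<and> VL u \<bullet> VL u = 2"
  using K3'[of j u] VL_E8[of u] by (simp add: VL_inner sumsq_dotL[symmetric])

lemma E8_min_iff: "x \<in> E8_min \<longleftrightarrow> x \<in> E8 \<and> x \<bullet> x = 2"
proof
  assume h: "x \<in> E8_min"
  define y where "y = VL [2,2,0,0,0,0,0,0]"
  have yE: "y \<in> E8" unfolding y_def by (rule VL_E8) auto
  have yy: "y \<bullet> y = 2" unfolding y_def by (simp add: VL_inner dotL_def)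
  have y0: "y \<noteq> 0" using yy by auto
  have xE: "x \<in> E8" and x0: "x \<noteq> 0" and le: "norm x \<le> norm y"
    using h yE y0 by (auto simp: E8_min_def)
  have "x \<bullet> x \<le> y \<bullet> y" using le by (simp add: norm_eq_sqrt_inner)
  then have "x \<bullet> x \<le> 2" using yy by simp
  then show "x \<in> E8 \<and> x \<bullet> x = 2" using E8_low[OF xE x0] xE by simp
next
  assume h: "x \<in> E8 \<and> x \<bullet> x = 2"
  have x0: "x \<noteq> 0" using h by auto
  have "norm x \<le> norm y" if "y \<in> E8" "y \<noteq> 0" for y
  proof -
    have "2 \<le> y \<bullet> y"
    proof (rule ccontr)
      assume "\<not> 2 \<le> y \<bullet> y"
      then have "y \<bullet> y \<le> 2" by simp
      then have "y \<bullet> y = 2" using E8_low[OF that] by simp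
      then show False using \<open>\<not> 2 \<le> y \<bullet> y\<close> by simp
    qed
    then show ?thesis using h by (simp add: norm_eq_sqrt_inner)
  qed
  then show "x \<in> E8_min" using h x0 by (auto simp: E8_min_def)
qed

lemma E8_min_eq: "E8_min = (\<Union>j<15. VL ` set (frameRoots j))"
proof
  show "E8_min \<subseteq> (\<Union>j<15. VL ` set (frameRoots j))"
  proof
    fix x assume "x \<in> E8_min"
    then have "x \<in> E8" "x \<bullet> x = 2" by (auto simp: E8_min_iff)
    moreover then have "x \<noteq> 0" by auto
    ultimately show "x \<in> (\<Union>j<15. VL ` set (frameRoots j))" using E8_low by fastforce
  qed
  show "(\<Union>j<15. VL ` set (frameRoots j)) \<subseteq> E8_min"
    using root_E8 by (auto simp: E8_min_iff)
qed


section \<open>Frames and lattices\<close>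

definition bv :: "nat \<Rightarrow> 8 \<Rightarrow> real^8" where "bv j i = VL (FB!j!nat_of i)"
definition Fr :: "nat \<Rightarrow> (real^8) set" where "Fr j = range (bv j) \<union> uminus ` range (bv j)"
definition Lt :: "nat \<Rightarrow> (real^8) set" where "Lt j = {x. \<forall>i. x \<bullet> bv j i \<in> \<int>}"
definition fL :: "nat \<Rightarrow> real^8 \<Rightarrow> real^8" where "fL j = (\<lambda>x. \<Sum>i\<in>UNIV. (x$i / sqrt 2) *\<^sub>R bv j i)"

lemma bv_inner: "j < 15 \<Longrightarrow> bv j i \<bullet> bv j i' = (if i = i' then 2 else 0)"
proof -
  assume j: "j < 15"
  have "bv j i \<bullet> bv j i' = of_int (dotL (FB!j!nat_of i) (FB!j!nat_of i')) / 4"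
    unfolding bv_def using j by (simp add: VL_inner FB_len)
  also have "\<dots> = (if i = i' then 2 else 0)"
    using j K4''[of j "nat_of i" "nat_of i'"] nat_of_inj[of i i'] by auto
  finally show ?thesis .
qed

lemma nth_image_set: "(\<lambda>k. xs ! k) ` {..<length xs} = set xs"
  by (auto simp: in_set_conv_nth)

lemma range_bv: "j < 15 \<Longrightarrow> range (bv j) = VL ` set (FB!j)"
proof -
  assume j: "j < 15"
  have "range (bv j) = (\<lambda>k. VL (FB!j!k)) ` range nat_of"
    unfolding bv_def by (simp add: image_image)
  also have "\<dots> = (\<lambda>k. VL (FB!j!k)) ` {..<8}" by (simp add: range_nat_of)
  also have "\<dots> = VL ` ((\<lambda>k. FB!j!k) ` {..<length (FB!j)})"
    using K4'[OF j] by (simp add: image_image)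
  also have "\<dots> = VL ` set (FB!j)" by (simp add: nth_image_set)
  finally show ?thesis .
qed

lemma Fr_eq: "j < 15 \<Longrightarrow> Fr j = VL ` set (frameRoots j)"
proof -
  assume j: "j < 15"
  have len: "u \<in> set (FB!j) \<Longrightarrow> length u = 8" for u
    using K3'[OF j, of u] by (simp add: frameRoots_def)
  have "uminus ` VL ` set (FB!j) = VL ` set (map (map uminus) (FB!j))"
  proof -
    have "uminus ` VL ` set (FB!j) = (\<lambda>u. VL (map uminus u)) ` set (FB!j)"
      by (auto simp: image_image VL_neg len intro!: image_cong)
    also have "\<dots> = VL ` set (map (map uminus) (FB!j))" by (simp add: image_image)
    finally show ?thesis .
  qed
  then show ?thesis
    unfolding Fr_def range_bv[OF j] frameRoots_def by (simp add: image_Un)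
qed

lemma Fr_frame: "j < 15 \<Longrightarrow> coordinate_frame (Fr j)"
proof -
  assume j: "j < 15"
  have n0: "bv j i \<noteq> 0" for i
  proof
    assume "bv j i = 0"
    then have "bv j i \<bullet> bv j i = 0" by simp
    then show False using bv_inner[OF j, of i i] by simp
  qed
  have orth: "i \<noteq> i' \<Longrightarrow> bv j i \<bullet> bv j i' = 0" for i i' using bv_inner[OF j] by simp
  have nrm: "norm (bv j i) = norm (bv j i')" for i i'
    using bv_inner[OF j, of i i] bv_inner[OF j, of i' i'] by (simp add: norm_eq_sqrt_inner)
  show ?thesis unfolding coordinate_frame_def Fr_def
    using n0 orth nrm by blast
qed

lemma Fr_card: "j < 15 \<Longrightarrow> card (Fr j) = 16"
proof -
  assume j: "j < 15"
  have inj: "inj (bv j)"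
  proof (rule injI)
    fix i i' assume e: "bv j i = bv j i'"
    show "i = i'"
    proof (rule ccontr)
      assume "i \<noteq> i'"
      then have "bv j i \<bullet> bv j i' = 0" using bv_inner[OF j] by simp
      then show False using e bv_inner[OF j, of i' i'] by simp
    qed
  qed
  have c1: "card (range (bv j)) = 8" using inj by (simp add: card_image)
  have c2: "card (uminus ` range (bv j)) = 8"
  proof -
    have "inj_on uminus (range (bv j))" by (simp add: inj_on_def)
    then show ?thesis using c1 by (simp add: card_image)
  qed
  have dj: "range (bv j) \<inter> uminus ` range (bv j) = {}"
  proof (rule ccontr)
    assume "range (bv j) \<inter> uminus ` range (bv j) \<noteq> {}"
    then obtain i i' where e: "bv j i = - bv j i'" by auto
    then have "bv j i \<bullet> bv j i = - (bv j i \<bullet> bv j i')" by simp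
    then show False using bv_inner[OF j, of i i] bv_inner[OF j, of i i'] by (simp split: if_splits)
  qed
  show ?thesis unfolding Fr_def using c1 c2 dj by (simp add: card_Un_disjoint)
qed

lemma Fr_finite: "finite (Fr j)"
  unfolding Fr_def by simp

lemma Fr_disj: "j < 15 \<Longrightarrow> k < 15 \<Longrightarrow> j \<noteq> k \<Longrightarrow> Fr j \<inter> Fr k = {}"
proof (rule ccontr)
  assume j: "j < 15" and k: "k < 15" and jk: "j \<noteq> k" and "Fr j \<inter> Fr k \<noteq> {}"
  then obtain u v where u: "u \<in> set (frameRoots j)" and v: "v \<in> set (frameRoots k)" and e: "VL u = VL v"
    by (auto simp: Fr_eq)
  have "u = v" using VL_inj[OF _ _ e] K3'[OF j u] K3'[OF k v] by simp
  then show False using K3'[OF j u] K3'[OF k v] jk by simp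
qed

lemma E8_min_Fr: "E8_min = (\<Union>j<15. Fr j)"
  unfolding E8_min_eq by (simp add: Fr_eq)

lemma Lt_sim: "j < 15 \<Longrightarrow> orthogonal_transformation (fL j) \<and> Lt j = (\<lambda>x. (1 / sqrt 2) *\<^sub>R fL j x) ` Z8"
  unfolding Lt_def fL_def using ortho_lattice[of "bv j"] bv_inner by blast

lemma in_E8_min_axis:
  fixes k :: 8
  assumes "k \<noteq> 0" and s: "s \<in> {1, -1::real}"
  shows "axis 0 1 + axis k s \<in> E8_min"
proof -
  have comp: "(axis 0 1 + axis k s) $ i \<in> \<int>" for i
    using s by (auto simp: axis_def)
  have "(\<Sum>i\<in>UNIV. (axis 0 1 + axis k s) $ i) = 1 + s"
    by (simp add: sum.distrib axis_def)
  then have "(\<Sum>i\<in>UNIV. (axis 0 1 + axis k s) $ i) / 2 \<in> \<int>"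
    using s by auto
  then have E: "axis 0 1 + axis k s \<in> E8"
    unfolding E8_def using comp by blast
  have "(axis 0 1 + axis k s) \<bullet> (axis 0 1 + axis k s) = 1 + s * s"
    using assms(1) by (simp add: inner_add_left inner_add_right inner_axis_axis)
  also have "\<dots> = 2" using s by auto
  finally show ?thesis using E by (simp add: E8_min_iff)
qed

definition half8 :: "real^8" where "half8 = (\<chi> i. 1/2)"

lemma in_E8_min_half: "half8 \<in> E8_min"
proof -
  have "half8 \<in> E8" unfolding E8_def half8_def by simp
  moreover have "half8 \<bullet> half8 = 2" by (simp add: inner_vec_def half8_def)
  ultimately show ?thesis by (simp add: E8_min_iff)
qed

lemma dual_E8:
  assumes h: "\<forall>r\<in>E8_min. x \<bullet> r \<in> \<int>"
  shows "x \<in> E8"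
proof -
  have p: "x$0 + x$k \<in> \<int>" if "k \<noteq> 0" for k :: 8
  proof -
    have "x \<bullet> (axis 0 1 + axis k 1) = x$0 + x$k" by (simp add: inner_add_right inner_axis)
    moreover have "x \<bullet> (axis 0 1 + axis k 1) \<in> \<int>" using h in_E8_min_axis[OF that, of 1] by simp
    ultimately show ?thesis by simp
  qed
  have m: "x$0 - x$k \<in> \<int>" if "k \<noteq> 0" for k :: 8
  proof -
    have "x \<bullet> (axis 0 1 + axis k (-1)) = x$0 - x$k" by (simp add: inner_add_right inner_axis)
    moreover have "x \<bullet> (axis 0 1 + axis k (-1)) \<in> \<int>" using h in_E8_min_axis[OF that, of "-1"] by simp
    ultimately show ?thesis by simp
  qed
  have "(1::8) \<noteq> 0" by simp
  have "(x$0 + x$1) + (x$0 - x$1) \<in> \<int>" using p[OF \<open>(1::8) \<noteq> 0\<close>] m[OF \<open>(1::8) \<noteq> 0\<close>] by (rule Ints_add)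
  then have "2 * x$0 \<in> \<int>" by simp
  then obtain n where n: "2 * x$0 = of_int n" by (auto elim: Ints_cases)
  have c: "(\<forall>i. x$i \<in> \<int>) \<or> (\<forall>i. x$i - 1/2 \<in> \<int>)"
  proof (cases "even n")
    case True
    then obtain t where "n = 2 * t" by (auto elim: evenE)
    then have x0: "x$0 = of_int t" using n by simp
    have "x$i \<in> \<int>" for i
    proof (cases "i = 0")
      case True then show ?thesis using x0 by simp
    next
      case False
      have "x$i = (x$0 + x$i) - of_int t" using x0 by simp
      also have "\<dots> \<in> \<int>" using p[OF False] by (intro Ints_diff) auto
      finally show ?thesis .
    qed
    then show ?thesis by blast
  next
    case False
    then obtain t where "n = 2 * t + 1" by (auto elim: oddE)
    then have x0: "x$0 = of_int t + 1/2" using n by simp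
    have "x$i - 1/2 \<in> \<int>" for i
    proof (cases "i = 0")
      case True then show ?thesis using x0 by simp
    next
      case False
      have "x$i - 1/2 = (x$0 + x$i) - of_int (t + 1)" using x0 by simp
      also have "\<dots> \<in> \<int>" using p[OF False] by (intro Ints_diff) auto
      finally show ?thesis .
    qed
    then show ?thesis by blast
  qed
  have "x \<bullet> half8 = (\<Sum>i\<in>UNIV. x$i) / 2"
    by (simp add: inner_vec_def sum_divide_distrib half8_def)
  then have "(\<Sum>i\<in>UNIV. x$i) / 2 \<in> \<int>" using h in_E8_min_half by metis
  with c show ?thesis unfolding E8_def by blast
qed

lemma Lt_inter: "E8 = (\<Inter>j<15. Lt j)"
proof
  show "E8 \<subseteq> (\<Inter>j<15. Lt j)"
  proof
    fix x assume x: "x \<in> E8"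
    have "x \<in> Lt j" if j: "j < 15" for j
    proof -
      have "bv j i \<in> E8_min" for i using j by (auto simp: E8_min_Fr Fr_def)
      then have "bv j i \<in> E8" for i by (simp add: E8_min_iff)
      then show ?thesis using x E8_integral by (auto simp: Lt_def)
    qed
    then show "x \<in> (\<Inter>j<15. Lt j)" by blast
  qed
  show "(\<Inter>j<15. Lt j) \<subseteq> E8"
  proof
    fix x assume x: "x \<in> (\<Inter>j<15. Lt j)"
    have "x \<bullet> r \<in> \<int>" if r: "r \<in> E8_min" for r
    proof -
      obtain j where j: "j < 15" and rj: "r \<in> Fr j" using r by (auto simp: E8_min_Fr)
      have xi: "x \<bullet> bv j i \<in> \<int>" for i using x j by (auto simp: Lt_def)
      from rj obtain i where "r = bv j i \<or> r = - bv j i" by (auto simp: Fr_def)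
      then show ?thesis using xi[of i] by (auto simp: inner_minus_right)
    qed
    then show "x \<in> E8" by (intro dual_E8) blast
  qed
qed

theorem mainTheorem7:
  shows "card E8_min = 240 \<and>
    (\<exists>F :: nat \<Rightarrow> (real^8) set.
       (\<forall>j<15. coordinate_frame (F j)) \<and>
       (\<forall>j<15. \<forall>k<15. j \<noteq> k \<longrightarrow> F j \<inter> F k = {}) \<and>
       (\<Union>j<15. F j) = E8_min) \<and>
    (\<exists>L :: nat \<Rightarrow> (real^8) set.
       (\<forall>j<15. similar_to_Z8 (L j)) \<and>
       (\<forall>j<15. \<forall>k<15. congruent_lattices (L j) (L k)) \<and>
       E8 = (\<Inter>j<15. L j))"
proof (intro conjI)
  have "card E8_min = (\<Sum>j<15. card (Fr j))"
    unfolding E8_min_Fr by (rule card_UN_disjoint) (auto simp: Fr_finite Fr_disj)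
  also have "\<dots> = (\<Sum>j<(15::nat). 16)" by (rule sum.cong) (auto simp: Fr_card)
  also have "\<dots> = 240" by simp
  finally show "card E8_min = 240" .
  show "\<exists>F :: nat \<Rightarrow> (real^8) set.
       (\<forall>j<15. coordinate_frame (F j)) \<and>
       (\<forall>j<15. \<forall>k<15. j \<noteq> k \<longrightarrow> F j \<inter> F k = {}) \<and>
       (\<Union>j<15. F j) = E8_min"
    by (rule exI[of _ Fr]) (auto simp: Fr_frame Fr_disj E8_min_Fr)
  have sim: "\<forall>j<15. similar_to_Z8 (Lt j)"
  proof (intro allI impI)
    fix j :: nat assume "j < 15"
    then show "similar_to_Z8 (Lt j)" unfolding similar_to_Z8_def
      using Lt_sim[of j] by (intro exI[of _ "1 / sqrt 2"] exI[of _ "fL j"]) auto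
  qed
  have con: "\<forall>j<15. \<forall>k<15. congruent_lattices (Lt j) (Lt k)"
  proof (intro allI impI)
    fix j k :: nat assume "j < 15" "k < 15"
    then show "congruent_lattices (Lt j) (Lt k)"
      using Lt_sim[of j] Lt_sim[of k] congr_scaled[of "fL j" "fL k" "1 / sqrt 2"] by simp
  qed
  show "\<exists>L :: nat \<Rightarrow> (real^8) set.
       (\<forall>j<15. similar_to_Z8 (L j)) \<and>
       (\<forall>j<15. \<forall>k<15. congruent_lattices (L j) (L k)) \<and>
       E8 = (\<Inter>j<15. L j)"
    using sim con Lt_inter by blast
qed

end
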